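(* Let $G$ be a graph and $S\subseteq V(G)$. Then one can admissibly remove a subset of $S$ from $G$ such that, in the remaining graph, the remaining vertices of $S$ form a clique and each of them has odd degree in the remaining graph.
   Context: Removing a set $T$ of vertices from a graph $G$ is a simple admissible removal if $T$ is an independent set in $G$ and the number of edges between $T$ and $V(G)\setminus T$ is even. Removing a (not necessarily independent) set of vertices is admissible if it can be realised by a sequence of simple admissible removals, each performed in the graph remaining after the previous ones. Degrees are always taken in the current remaining graph. *)

theory Defs
  imports Main
begin

text \<open>Removing a set of vertices leaves the induced subgraph on the rest, so a
  graph state after removals is represented by its remaining vertex set W (with E
  restricted to W).\<close>

definition simple_graph :: "'a set \<Rightarrow> ('a \<Rightarrow> 'a \<Rightarrow> bool) \<Rightarrow> bool" where
  "simple_graph V E \<longleftrightarrow> finite V \<and> (\<forall>x y. E x y \<longrightarrow> E y x) \<and> (\<forall>x. \<not> E x x)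
     \<and> (\<forall>x y. E x y \<longrightarrow> x \<in> V \<and> y \<in> V)"

definition deg_in :: "'a set \<Rightarrow> ('a \<Rightarrow> 'a \<Rightarrow> bool) \<Rightarrow> 'a \<Rightarrow> nat" where
  "deg_in W E x = card {y \<in> W. E x y}"

definition independent_in :: "'a set \<Rightarrow> ('a \<Rightarrow> 'a \<Rightarrow> bool) \<Rightarrow> 'a set \<Rightarrow> bool" where
  "independent_in W E T \<longleftrightarrow> T \<subseteq> W \<and> (\<forall>x\<in>T. \<forall>y\<in>T. \<not> E x y)"

text \<open>Number of edges between T and W - T (T independent, so each such edge is
  counted exactly once as an ordered pair (t, v) with t in T).\<close>
definition cut_edges :: "'a set \<Rightarrow> ('a \<Rightarrow> 'a \<Rightarrow> bool) \<Rightarrow> 'a set \<Rightarrow> nat" where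
  "cut_edges W E T = card {(t, v). t \<in> T \<and> v \<in> W - T \<and> E t v}"

definition simple_admissible :: "'a set \<Rightarrow> ('a \<Rightarrow> 'a \<Rightarrow> bool) \<Rightarrow> 'a set \<Rightarrow> bool" where
  "simple_admissible W E T \<longleftrightarrow> independent_in W E T \<and> even (cut_edges W E T)"

inductive admissible :: "'a set \<Rightarrow> ('a \<Rightarrow> 'a \<Rightarrow> bool) \<Rightarrow> 'a set \<Rightarrow> bool"
  for V E where
  adm_empty: "admissible V E {}"
| adm_step: "admissible V E R \<Longrightarrow> simple_admissible (V - R) E T \<Longrightarrow> admissible V E (R \<union> T)"

end

theory Submission
  imports Defs
begin

lemma adm_comp:
  assumes "admissible (W - R1) E R2" and "admissible W E R1"
  shows "admissible W E (R1 \<union> R2)"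
  using assms(1)
proof (induction rule: admissible.induct)
  case adm_empty
  then show ?case using assms(2) by simp
next
  case (adm_step R T)
  have "admissible W E ((R1 \<union> R) \<union> T)"
  proof (rule admissible.adm_step[OF adm_step.IH])
    have "W - (R1 \<union> R) = W - R1 - R" by auto
    then show "simple_admissible (W - (R1 \<union> R)) E T" using adm_step.hyps(2) by simp
  qed
  then show ?case by (simp add: Un_assoc)
qed

lemma cut_sum:
  assumes "independent_in W E T" "finite W"
  shows "cut_edges W E T = (\<Sum>t\<in>T. deg_in W E t)"
proof -
  have fT: "finite T" using assms unfolding independent_in_def by (meson finite_subset)
  have "{(t, v). t \<in> T \<and> v \<in> W - T \<and> E t v} = Sigma T (\<lambda>t. {y \<in> W. E t y})"
    using assms(1) unfolding independent_in_def by auto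
  then show ?thesis unfolding cut_edges_def deg_in_def
    using fT assms(2) by (simp add: card_SigmaI)
qed

lemma main_gen:
  assumes "finite W" "S \<subseteq> W" "\<forall>x y. E x y \<longrightarrow> E y x" "\<forall>x. \<not> E x x"
  shows "\<exists>R. R \<subseteq> S \<and> admissible W E R
           \<and> (\<forall>x\<in>S - R. \<forall>y\<in>S - R. x \<noteq> y \<longrightarrow> E x y)
           \<and> (\<forall>x\<in>S - R. odd (deg_in (W - R) E x))"
  using assms(1,2)
proof (induction "card S" arbitrary: S W rule: less_induct)
  case less
  have fS: "finite S" using less.prems finite_subset by blast
  show ?case
  proof (cases "\<exists>v\<in>S. even (deg_in W E v)")
    case True
    then obtain v where v: "v \<in> S" "even (deg_in W E v)" by blast
    have ind: "independent_in W E {v}" using v less.prems assms(4)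
      unfolding independent_in_def by auto
    have "simple_admissible ({} ) E {v} \<or> True" by simp
    have sa: "simple_admissible (W - {}) E {v}"
      unfolding simple_admissible_def using ind cut_sum[OF ind less.prems(1)] v by simp
    have a1: "admissible W E {v}"
      using admissible.adm_step[OF admissible.adm_empty sa] by simp
    have "card (S - {v}) < card S" using v fS by (metis card_Diff1_less)
    then obtain R where R: "R \<subseteq> S - {v}" "admissible (W - {v}) E R"
      "\<forall>x\<in>S - {v} - R. \<forall>y\<in>S - {v} - R. x \<noteq> y \<longrightarrow> E x y"
      "\<forall>x\<in>S - {v} - R. odd (deg_in (W - {v} - R) E x)"
      using less.hyps[of "S - {v}" "W - {v}"] less.prems by blast
    have e1: "S - ({v} \<union> R) = S - {v} - R" "W - ({v} \<union> R) = W - {v} - R" by auto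
    show ?thesis
      apply (rule exI[of _ "{v} \<union> R"])
      using R adm_comp[OF R(2) a1] v unfolding e1 by auto
  next
    case False
    show ?thesis
    proof (cases "\<forall>x\<in>S. \<forall>y\<in>S. x \<noteq> y \<longrightarrow> E x y")
      case True
      then show ?thesis using False
        by (intro exI[of _ "{}"]) (auto intro: admissible.adm_empty)
    next
      case False2: False
      then obtain u v where uv: "u \<in> S" "v \<in> S" "u \<noteq> v" "\<not> E u v" by blast
      have ind: "independent_in W E {u, v}" using uv less.prems assms(3,4)
        unfolding independent_in_def by auto
      have "odd (deg_in W E u)" "odd (deg_in W E v)" using False uv by auto
      then have sa: "simple_admissible (W - {}) E {u, v}"
        unfolding simple_admissible_def using ind cut_sum[OF ind less.prems(1)] uv by simp
      have a1: "admissible W E {u, v}"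
        using admissible.adm_step[OF admissible.adm_empty sa] by simp
      have "card (S - {u, v}) < card S" using uv fS
        by (intro psubset_card_mono) auto
      then obtain R where R: "R \<subseteq> S - {u, v}" "admissible (W - {u, v}) E R"
        "\<forall>x\<in>S - {u, v} - R. \<forall>y\<in>S - {u, v} - R. x \<noteq> y \<longrightarrow> E x y"
        "\<forall>x\<in>S - {u, v} - R. odd (deg_in (W - {u, v} - R) E x)"
        using less.hyps[of "S - {u, v}" "W - {u, v}"] less.prems by blast
      have e1: "S - ({u, v} \<union> R) = S - {u, v} - R" "W - ({u, v} \<union> R) = W - {u, v} - R" by auto
      show ?thesis
        apply (rule exI[of _ "{u, v} \<union> R"])
        using R adm_comp[OF R(2) a1] uv unfolding e1 by auto
    qed
  qed
qed

theorem mainTheorem6: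
  fixes V S :: "'a set" and E :: "'a \<Rightarrow> 'a \<Rightarrow> bool"
  assumes "simple_graph V E" and "S \<subseteq> V"
  shows "\<exists>R. R \<subseteq> S \<and> admissible V E R
           \<and> (\<forall>x\<in>S - R. \<forall>y\<in>S - R. x \<noteq> y \<longrightarrow> E x y)
           \<and> (\<forall>x\<in>S - R. odd (deg_in (V - R) E x))"
  using main_gen[of V S E] assms unfolding simple_graph_def by blast

end
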